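(* Fix $\beta\in\mathbb R$ and let $p_n=\frac12+r_n$ for $n\ge1$, with $r_n$ as in the context. Then $D(n)\sim n(\log\log n)^\beta$ as $n\to\infty$.
   Context: Fix $\beta\in\mathbb R$ and an integer $n_1\ge16$ such that $\frac14\left(\frac1n+\frac{1}{n(\log\log n)^\beta}\right)\in(0,1/2)$ for all $n\ge n_1$. Define $r_n=\frac14\left(\frac1n+\frac{1}{n(\log\log n)^\beta}\right)$ for $n\ge n_1$ and $r_n=r_{n_1}$ for $1\le n<n_1$. Consider the chain: $p_0=1$, $q_0=0$, $p_n=\frac12+r_n$, $q_n=1-p_n$ for $n\ge1$; $X=(X_k)_{k\ge0}$ is the Markov chain on $\mathbb Z_+$ with $X_0=0$, $\mathbb P(X_{k+1}=n+1\mid X_k=n)=p_n$, $\mathbb P(X_{k+1}=n-1\mid X_k=n)=q_n$. Let $\rho_k=q_k/p_k$ ($k\ge1$), and for $m\ge0$ let $D(m)=1+\sum_{j=1}^{\infty}\rho_{m+1}\cdots\rho_{m+j}$. *)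

theory Defs
  imports "HOL-Analysis.Analysis" "HOL-Library.Landau_Symbols"
begin

text \<open>r_n for n \<ge> n1, and r_n = r_{n1} for 1 \<le> n < n1 (realised via max n n1).\<close>
definition r_seq :: "real \<Rightarrow> nat \<Rightarrow> nat \<Rightarrow> real" where
  "r_seq \<beta> n1 n = (let m = real (max n n1) in
      (1/4) * (1 / m + 1 / (m * (ln (ln m)) powr \<beta>)))"

definition p_seq :: "real \<Rightarrow> nat \<Rightarrow> nat \<Rightarrow> real" where
  "p_seq \<beta> n1 n = (if n = 0 then 1 else 1/2 + r_seq \<beta> n1 n)"

definition q_seq :: "real \<Rightarrow> nat \<Rightarrow> nat \<Rightarrow> real" where
  "q_seq \<beta> n1 n = 1 - p_seq \<beta> n1 n"

definition rho_seq :: "real \<Rightarrow> nat \<Rightarrow> nat \<Rightarrow> real" where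
  "rho_seq \<beta> n1 k = q_seq \<beta> n1 k / p_seq \<beta> n1 k"

text \<open>D(m) = 1 + sum_{j>=1} rho_{m+1} ... rho_{m+j}; the summation index j' = j - 1 starts at 0.\<close>
definition D_fun :: "real \<Rightarrow> nat \<Rightarrow> nat \<Rightarrow> real" where
  "D_fun \<beta> n1 m = 1 + (\<Sum>j. \<Prod>i\<in>{1..Suc j}. rho_seq \<beta> n1 (m + i))"

end

theory Submission
  imports Defs "HOL-Real_Asymp.Real_Asymp"
begin

definition GG :: "real \<Rightarrow> real \<Rightarrow> real" where "GG b x = x * ln (ln x) powr b"
definition RH :: "real \<Rightarrow> real \<Rightarrow> real" where
  "RH b x = (1/2 - (1/4) * (1 / x + 1 / (x * (ln (ln x)) powr b))) / (1/2 + (1/4) * (1 / x + 1 / (x * (ln (ln x)) powr b)))"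

lemma LA: "((\<lambda>m::nat. GG b (real m) - RH b (real m + 1) * GG b (real m + 1)) \<longlongrightarrow> 1) at_top"
proof -
  consider "b < 0" | "b = 0" | "b > 0" by linarith
  then show ?thesis
  proof cases
    case 1 then show ?thesis unfolding GG_def RH_def by real_asymp
  next
    case 2 then show ?thesis unfolding GG_def RH_def by real_asymp
  next
    case 3 then show ?thesis unfolding GG_def RH_def by real_asymp
  qed
qed

lemma LB: "eventually (\<lambda>m::nat. RH b (real m + 1) * (GG b (real m + 1) * ln (real m + 1)) < GG b (real m) * ln (real m)) at_top"
proof -
  consider "b < 0" | "b = 0" | "b > 0" by linarith
  then show ?thesis
  proof cases
    case 1 then show ?thesis unfolding GG_def RH_def by real_asymp
  next
    case 2 then show ?thesis unfolding GG_def RH_def by real_asymp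
  next
    case 3 then show ?thesis unfolding GG_def RH_def by real_asymp
  qed
qed

lemma LC: "eventually (\<lambda>m::nat. GG b (real m) > 0) at_top"
  unfolding GG_def by real_asymp

lemma LD: "((\<lambda>N::nat. c / ln (real m + real N)) \<longlongrightarrow> 0) at_top"
  by real_asymp

definition PP :: "real \<Rightarrow> nat \<Rightarrow> nat \<Rightarrow> nat \<Rightarrow> real" where
  "PP \<beta> n1 m j = (\<Prod>i\<in>{1..j}. rho_seq \<beta> n1 (m + i))"

lemma PP_0[simp]: "PP \<beta> n1 m 0 = 1"
  by (simp add: PP_def)

lemma PP_Suc: "PP \<beta> n1 m (Suc j) = PP \<beta> n1 m j * rho_seq \<beta> n1 (m + Suc j)"
  by (simp add: PP_def atLeastAtMostSuc_conv mult.commute)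

lemma PP_add: "PP \<beta> n1 m (d + j) = PP \<beta> n1 m d * PP \<beta> n1 (m + d) j"
  by (induction j) (simp_all add: PP_Suc algebra_simps)

lemma GG_nonneg: "x \<ge> 0 \<Longrightarrow> GG b x \<ge> 0"
  by (simp add: GG_def)

context
  fixes \<beta> :: real and n1 :: nat
  assumes n1: "n1 \<ge> 16"
    and hyp: "\<forall>n\<ge>n1. 0 < (1/4) * (1 / real n + 1 / (real n * (ln (ln (real n))) powr \<beta>))
                 \<and> (1/4) * (1 / real n + 1 / (real n * (ln (ln (real n))) powr \<beta>)) < 1/2"
begin

lemma r_bounds: "0 < r_seq \<beta> n1 k \<and> r_seq \<beta> n1 k < 1/2"
proof -
  have "max k n1 \<ge> n1" by simp
  from hyp[rule_format, OF this] show ?thesis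
    by (simp add: r_seq_def Let_def)
qed

lemma rho_bounds: "k \<ge> 1 \<Longrightarrow> 0 < rho_seq \<beta> n1 k \<and> rho_seq \<beta> n1 k < 1"
  using r_bounds[of k]
  by (simp add: rho_seq_def q_seq_def p_seq_def divide_simps)

lemma rho_eq: "k \<ge> n1 \<Longrightarrow> rho_seq \<beta> n1 k = RH \<beta> (real k)"
  using n1 by (simp add: rho_seq_def q_seq_def p_seq_def r_seq_def RH_def Let_def max_def)

lemma PP_nonneg: "PP \<beta> n1 m j \<ge> 0"
  unfolding PP_def using rho_bounds by (intro prod_nonneg) (auto simp: less_imp_le)

lemma super:
  assumes "\<forall>k\<ge>m. g k \<ge> 1 + rho_seq \<beta> n1 (Suc k) * g (Suc k)"
  shows "(\<Sum>j<N. PP \<beta> n1 m j) + PP \<beta> n1 m N * g (m + N) \<le> g m"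
proof (induction N)
  case 0 then show ?case by simp
next
  case (Suc N)
  have "g (m+N) \<ge> 1 + rho_seq \<beta> n1 (Suc (m+N)) * g (Suc (m+N))"
    using assms by auto
  then have "PP \<beta> n1 m N * (1 + rho_seq \<beta> n1 (Suc (m+N)) * g (Suc (m+N))) \<le> PP \<beta> n1 m N * g (m+N)"
    using PP_nonneg by (intro mult_left_mono) auto
  then show ?case using Suc by (simp add: PP_Suc algebra_simps)
qed

lemma sub:
  assumes "\<forall>k\<ge>m. g k \<le> 1 + rho_seq \<beta> n1 (Suc k) * g (Suc k)"
  shows "g m \<le> (\<Sum>j<N. PP \<beta> n1 m j) + PP \<beta> n1 m N * g (m + N)"
proof (induction N)
  case 0 then show ?case by simp
next
  case (Suc N)
  have "g (m+N) \<le> 1 + rho_seq \<beta> n1 (Suc (m+N)) * g (Suc (m+N))"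
    using assms by auto
  then have "PP \<beta> n1 m N * g (m+N) \<le> PP \<beta> n1 m N * (1 + rho_seq \<beta> n1 (Suc (m+N)) * g (Suc (m+N)))"
    using PP_nonneg by (intro mult_left_mono) auto
  then show ?case using Suc by (simp add: PP_Suc algebra_simps)
qed

abbreviation "G n \<equiv> GG \<beta> (real n)"

lemma super_ev:
  assumes "c > 1"
  shows "\<exists>M. \<forall>k\<ge>M. c * G k \<ge> 1 + rho_seq \<beta> n1 (Suc k) * (c * G (Suc k))"
proof -
  have "eventually (\<lambda>k. GG \<beta> (real k) - RH \<beta> (real k + 1) * GG \<beta> (real k + 1) > 1 / c) at_top"
    using LA[of \<beta>] assms by (intro order_tendstoD) auto
  moreover have "eventually (\<lambda>k::nat. k \<ge> n1) at_top" by simp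
  ultimately have "eventually (\<lambda>k. c * G k \<ge> 1 + rho_seq \<beta> n1 (Suc k) * (c * G (Suc k))) at_top"
  proof eventually_elim
    case (elim k)
    have r: "rho_seq \<beta> n1 (Suc k) = RH \<beta> (real k + 1)" using elim rho_eq[of "Suc k"] by (simp add: add.commute)
    have e: "G (Suc k) = GG \<beta> (real k + 1)" by (simp add: add.commute)
    have "1 < c * (G k - RH \<beta> (real k + 1) * GG \<beta> (real k + 1))"
      using elim assms by (simp add: field_simps)
    then show ?case unfolding r e by (simp add: algebra_simps)
  qed
  then show ?thesis by (simp add: eventually_at_top_linorder)
qed

lemma sub_ev:
  assumes "c < 1"
  shows "\<exists>M. \<forall>k\<ge>M. c * G k \<le> 1 + rho_seq \<beta> n1 (Suc k) * (c * G (Suc k))"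
proof -
  have ev1: "eventually (\<lambda>k. GG \<beta> (real k) - RH \<beta> (real k + 1) * GG \<beta> (real k + 1) < 1 / c) at_top"
    if "c > 0" using LA[of \<beta>] assms that by (intro order_tendstoD) auto
  have ev2: "eventually (\<lambda>k::nat. GG \<beta> (real k) - RH \<beta> (real k + 1) * GG \<beta> (real k + 1) > 0) at_top"
    using LA[of \<beta>] by (intro order_tendstoD) auto
  have ev3: "eventually (\<lambda>k::nat. k \<ge> n1) at_top" by simp
  have "eventually (\<lambda>k. c * G k \<le> 1 + rho_seq \<beta> n1 (Suc k) * (c * G (Suc k))) at_top"
  proof (cases "c > 0")
    case True
    from ev1[OF True] ev2 ev3 show ?thesis
    proof eventually_elim
      case (elim k)
      have r: "rho_seq \<beta> n1 (Suc k) = RH \<beta> (real k + 1)" using elim rho_eq[of "Suc k"] by (simp add: add.commute)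
      have e: "G (Suc k) = GG \<beta> (real k + 1)" by (simp add: add.commute)
      have "c * (G k - RH \<beta> (real k + 1) * GG \<beta> (real k + 1)) < 1"
        using elim True by (simp add: field_simps)
      then show ?case unfolding r e by (simp add: algebra_simps)
    qed
  next
    case False
    from ev2 ev3 show ?thesis
    proof eventually_elim
      case (elim k)
      have r: "rho_seq \<beta> n1 (Suc k) = RH \<beta> (real k + 1)" using elim rho_eq[of "Suc k"] by (simp add: add.commute)
      have e: "G (Suc k) = GG \<beta> (real k + 1)" by (simp add: add.commute)
      have "c * (G k - RH \<beta> (real k + 1) * GG \<beta> (real k + 1)) \<le> 0"
        using elim False by (intro mult_nonpos_nonneg) auto
      then show ?case unfolding r e by (simp add: algebra_simps)
    qed
  qed
  then show ?thesis by (simp add: eventually_at_top_linorder)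
qed

lemma summable_PP: "summable (PP \<beta> n1 m)"
proof -
  obtain M where M: "\<forall>k\<ge>M. 2 * G k \<ge> 1 + rho_seq \<beta> n1 (Suc k) * (2 * G (Suc k))"
    using super_ev[of 2] by auto
  have sM: "summable (PP \<beta> n1 M')" if "M' \<ge> M" for M'
  proof (rule bounded_imp_summable)
    show "0 \<le> PP \<beta> n1 M' n" for n by (rule PP_nonneg)
    show "(\<Sum>k\<le>n. PP \<beta> n1 M' k) \<le> 2 * G M'" for n
    proof -
      have "(\<Sum>j<Suc n. PP \<beta> n1 M' j) + PP \<beta> n1 M' (Suc n) * (2 * G (M' + Suc n)) \<le> 2 * G M'"
        using M that by (intro super) auto
      moreover have "PP \<beta> n1 M' (Suc n) * (2 * G (M' + Suc n)) \<ge> 0"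
        using PP_nonneg GG_nonneg by simp
      ultimately show ?thesis by (simp add: lessThan_Suc_atMost)
    qed
  qed
  define d where "d = M - m"
  have "summable (\<lambda>j. PP \<beta> n1 m d * PP \<beta> n1 (m + d) j)"
    using sM[of "m + d"] unfolding d_def by (intro summable_mult) auto
  moreover have eq: "\<And>j. PP \<beta> n1 m (j + d) = PP \<beta> n1 m d * PP \<beta> n1 (m + d) j"
    by (metis PP_add add.commute)
  ultimately have "summable (\<lambda>j. PP \<beta> n1 m (j + d))"
    by (simp only: eq)
  then show ?thesis by simp
qed

lemma D_eq: "D_fun \<beta> n1 m = suminf (PP \<beta> n1 m)"
proof -
  have "(\<lambda>j. \<Prod>i\<in>{1..Suc j}. rho_seq \<beta> n1 (m + i)) = (\<lambda>j. PP \<beta> n1 m (Suc j))"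
    by (simp add: PP_def)
  then show ?thesis
    unfolding D_fun_def using suminf_split_head[OF summable_PP[of m]] by simp
qed

lemma upper:
  assumes "c > 1" shows "\<exists>M. \<forall>m\<ge>M. D_fun \<beta> n1 m \<le> c * G m"
proof -
  obtain M where M: "\<forall>k\<ge>M. c * G k \<ge> 1 + rho_seq \<beta> n1 (Suc k) * (c * G (Suc k))"
    using super_ev[OF assms] by auto
  have "D_fun \<beta> n1 m \<le> c * G m" if "m \<ge> M" for m
    unfolding D_eq
  proof (rule suminf_le_const[OF summable_PP])
    fix N
    have "(\<Sum>j<N. PP \<beta> n1 m j) + PP \<beta> n1 m N * (c * G (m + N)) \<le> c * G m"
      using M that by (intro super) auto
    moreover have "PP \<beta> n1 m N * (c * G (m + N)) \<ge> 0"
      using PP_nonneg GG_nonneg assms by simp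
    ultimately show "(\<Sum>j<N. PP \<beta> n1 m j) \<le> c * G m" by simp
  qed
  then show ?thesis by blast
qed

lemma lower:
  assumes "c < 1" shows "\<exists>M. \<forall>m\<ge>M. c * G m \<le> D_fun \<beta> n1 m"
proof -
  obtain M1 where M1: "\<forall>k\<ge>M1. c * G k \<le> 1 + rho_seq \<beta> n1 (Suc k) * (c * G (Suc k))"
    using sub_ev[OF assms] by auto
  obtain M2 where M2: "\<forall>k\<ge>M2. RH \<beta> (real k + 1) * (GG \<beta> (real k + 1) * ln (real k + 1)) < GG \<beta> (real k) * ln (real k)"
    using LB[of \<beta>] by (auto simp: eventually_at_top_linorder)
  define M where "M = max M1 (max M2 n1)"
  have "c * G m \<le> D_fun \<beta> n1 m" if "m \<ge> M" for m
  proof -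
    have mn1: "m \<ge> n1" using that by (simp add: M_def)
    have phi: "PP \<beta> n1 m N * (G (m+N) * ln (real (m+N))) \<le> G m * ln (real m)" for N
    proof (induction N)
      case 0 then show ?case by simp
    next
      case (Suc N)
      define k where "k = m + N"
      have kM: "k \<ge> M2" "k \<ge> n1" using that unfolding k_def M_def by auto
      have r: "rho_seq \<beta> n1 (Suc k) = RH \<beta> (real k + 1)" using kM rho_eq[of "Suc k"] by (simp add: add.commute)
      have "rho_seq \<beta> n1 (Suc k) * (G (Suc k) * ln (real (Suc k))) \<le> G k * ln (real k)"
        using M2 kM unfolding r by (simp add: add.commute less_imp_le)
      then have "PP \<beta> n1 m N * (rho_seq \<beta> n1 (Suc k) * (G (Suc k) * ln (real (Suc k))))
          \<le> PP \<beta> n1 m N * (G k * ln (real k))"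
        using PP_nonneg by (intro mult_left_mono) auto
      then show ?case using Suc unfolding k_def by (simp add: PP_Suc algebra_simps)
    qed
    have bnd: "c * G m \<le> D_fun \<beta> n1 m + \<bar>c\<bar> * (G m * ln (real m) / ln (real m + real N))" for N
    proof -
      have lnpos: "ln (real m + real N) > 0" using mn1 n1 by simp
      have "PP \<beta> n1 m N * G (m+N) \<le> G m * ln (real m) / ln (real m + real N)"
        using phi[of N] lnpos by (simp add: field_simps)
      then have "c * (PP \<beta> n1 m N * G (m+N)) \<le> \<bar>c\<bar> * (G m * ln (real m) / ln (real m + real N))"
      proof -
        assume h: "PP \<beta> n1 m N * G (m+N) \<le> G m * ln (real m) / ln (real m + real N)"
        have "c * (PP \<beta> n1 m N * G (m+N)) \<le> \<bar>c\<bar> * (PP \<beta> n1 m N * G (m+N))"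
          using PP_nonneg GG_nonneg by (intro mult_right_mono) auto
        also have "\<dots> \<le> \<bar>c\<bar> * (G m * ln (real m) / ln (real m + real N))"
          using h by (intro mult_left_mono) auto
        finally show ?thesis .
      qed
      moreover have "c * G m \<le> (\<Sum>j<N. PP \<beta> n1 m j) + PP \<beta> n1 m N * (c * G (m + N))"
        using M1 that unfolding M_def by (intro sub) auto
      moreover have "(\<Sum>j<N. PP \<beta> n1 m j) \<le> D_fun \<beta> n1 m"
        unfolding D_eq using PP_nonneg by (intro sum_le_suminf summable_PP) auto
      ultimately show ?thesis by (simp add: algebra_simps)
    qed
    have lim: "((\<lambda>N. D_fun \<beta> n1 m + \<bar>c\<bar> * (G m * ln (real m) / ln (real m + real N))) \<longlongrightarrow> D_fun \<beta> n1 m + \<bar>c\<bar> * 0) at_top"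
      by (intro tendsto_add tendsto_const tendsto_mult LD)
    show ?thesis
      using tendsto_le[OF _ lim tendsto_const] bnd by simp
  qed
  then show ?thesis by blast
qed

lemma main_equiv: "(\<lambda>n. D_fun \<beta> n1 n) \<sim>[at_top] (\<lambda>n. real n * (ln (ln (real n))) powr \<beta>)"
proof (rule asymp_equivI')
  show "((\<lambda>n. D_fun \<beta> n1 n / (real n * ln (ln (real n)) powr \<beta>)) \<longlongrightarrow> 1) at_top"
  proof (rule tendstoI)
    fix e :: real assume e: "e > 0"
    obtain Ma where Ma: "\<forall>m\<ge>Ma. D_fun \<beta> n1 m \<le> (1 + e/2) * G m" using upper[of "1 + e/2"] e by auto
    obtain Mb where Mb: "\<forall>m\<ge>Mb. (1 - e/2) * G m \<le> D_fun \<beta> n1 m" using lower[of "1 - e/2"] e by auto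
    have "eventually (\<lambda>m. m \<ge> Ma \<and> m \<ge> Mb) at_top" by (intro eventually_conj eventually_ge_at_top)
    with LC[of \<beta>] show "eventually (\<lambda>n. dist (D_fun \<beta> n1 n / (real n * ln (ln (real n)) powr \<beta>)) 1 < e) at_top"
    proof eventually_elim
      case (elim m)
      define g where "g = G m"
      have g: "g > 0" using elim by (simp add: g_def)
      have a: "D_fun \<beta> n1 m \<le> (1 + e/2) * g" "(1 - e/2) * g \<le> D_fun \<beta> n1 m"
        using Ma Mb elim by (auto simp: g_def)
      have h1: "\<bar>D_fun \<beta> n1 m - g\<bar> \<le> e/2 * g"
        using a by (intro abs_leI) (simp_all add: algebra_simps)
      have "D_fun \<beta> n1 m / g - 1 = (D_fun \<beta> n1 m - g) / g" using g by (simp add: field_simps)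
      then have "\<bar>D_fun \<beta> n1 m / g - 1\<bar> = \<bar>D_fun \<beta> n1 m - g\<bar> / g" using g by simp
      also have "\<dots> \<le> e/2" using h1 g by (simp add: divide_le_eq)
      finally have "\<bar>D_fun \<beta> n1 m / g - 1\<bar> \<le> e/2" .
      then show ?case using e by (simp add: dist_real_def g_def GG_def)
    qed
  qed
qed

end

theorem lemma1:
  fixes \<beta> :: real and n1 :: nat
  assumes "n1 \<ge> 16"
    and "\<forall>n\<ge>n1. 0 < (1/4) * (1 / real n + 1 / (real n * (ln (ln (real n))) powr \<beta>))
                 \<and> (1/4) * (1 / real n + 1 / (real n * (ln (ln (real n))) powr \<beta>)) < 1/2"
  shows "(\<forall>m. summable (\<lambda>j. \<Prod>i\<in>{1..Suc j}. rho_seq \<beta> n1 (m + i)))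
         \<and> (\<lambda>n. D_fun \<beta> n1 n) \<sim>[at_top] (\<lambda>n. real n * (ln (ln (real n))) powr \<beta>)"
proof
  show "\<forall>m. summable (\<lambda>j. \<Prod>i\<in>{1..Suc j}. rho_seq \<beta> n1 (m + i))"
  proof
    fix m
    have "summable (\<lambda>j. PP \<beta> n1 m (Suc j))"
      using summable_PP[OF assms, of m] by (simp only: summable_Suc_iff)
    then show "summable (\<lambda>j. \<Prod>i\<in>{1..Suc j}. rho_seq \<beta> n1 (m + i))"
      by (simp add: PP_def)
  qed
  show "(\<lambda>n. D_fun \<beta> n1 n) \<sim>[at_top] (\<lambda>n. real n * (ln (ln (real n))) powr \<beta>)"
    by (rule main_equiv[OF assms])
qed

end
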